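(* Let $\frac23\le M<\frac34$. Algorithm D (defined in the context) has migration factor at most $M$, and on every input whose optimal offline makespan is $1$ it produces a schedule of makespan at most $2-M$. Hence its competitive ratio is at most $2-M$.
   Context: Model (two hierarchical machines with migration, bin stretching). Jobs $1,2,\dots,n$ arrive one by one ($n$ unknown in advance). Job $j$ has a size $p_j>0$ and a grade of service (GoS) $g_j\in\{1,2\}$; a job of GoS $1$ may only be processed on machine $m_1$, a job of GoS $2$ may be processed on $m_1$ or on $m_2$. The load of a machine is the total size of its jobs, the makespan is the maximum load. When job $j$ arrives, the algorithm must assign it, and may migrate previously arrived jobs (respecting GoS) of total size at most $M\cdot p_j$ (migration factor $M$). Bin stretching: the optimal offline makespan of the complete input is known in advance and scaled to $1$. The competitive ratio is the supremum over inputs of (algorithm's makespan)/(optimal makespan). Notation: $Y_{j}$ is the set of jobs on $m_2$ just after job $j$ has been handled, $y_j$ its total size, $y_0=0$; "sorted $Y_{j-1}$" lists $Y_{j-1}$ in non-increasing order of size; $w_j$ is the total size of the (current) set $W$. Algorithm D (parameter $M$). On arrival of job $j$: Step 2: if $g_j=1$ or $y_{j-1}\ge M$, assign $j$ to $m_1$. Step 3: else if $y_{j-1}+p_j\le 2-M$, assign $j$ to $m_2$. Step 4: else if $p_j\ge M$: let $W$ be the longest prefix of sorted $Y_{j-1}$ with total size at most $M\cdot p_j$ (possibly empty). If $y_{j-1}-w_j+p_j>2-M$, assign $j$ to $m_1$; otherwise migrate the jobs of $W$ to $m_1$ and assign $j$ to $m_2$. Step 5: else (so $p_j<M$): let $W$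 be the shortest prefix of sorted $Y_{j-1}$ with total size at least $M/3$ (or $Y_{j-1}$ if none exists). If $w_j>\min\{2M/3,\,M\cdot p_j\}$, replace $W$ by $Y_{j-1}\setminus W$. Then, if $y_{j-1}-w_j+p_j>2-M$, assign $j$ to $m_1$; otherwise migrate the jobs of $W$ to $m_1$ and assign $j$ to $m_2$. *)

theory Defs
  imports Complex_Main
begin

text \<open>Jobs are indexed 0,1,2,... in order of arrival; job i has size p i and
GoS g i (1 or 2). A state is the set Y of (indices of) jobs currently on
machine m2; all other arrived jobs are on machine m1.\<close>

definition load :: "(nat \<Rightarrow> real) \<Rightarrow> nat set \<Rightarrow> real" where
  "load p S = (\<Sum>i\<in>S. p i)"

definition sorted_noninc :: "(nat \<Rightarrow> real) \<Rightarrow> nat list \<Rightarrow> bool" where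
  "sorted_noninc p xs \<longleftrightarrow> distinct xs \<and> sorted_wrt (\<lambda>a b. p a \<ge> p b) xs"

definition prefix_sum :: "(nat \<Rightarrow> real) \<Rightarrow> nat list \<Rightarrow> nat \<Rightarrow> real" where
  "prefix_sum p xs k = sum_list (map p (take k xs))"

definition W_step4 :: "real \<Rightarrow> (nat \<Rightarrow> real) \<Rightarrow> nat list \<Rightarrow> real \<Rightarrow> nat set" where
  "W_step4 M p xs pj =
     set (take (GREATEST k. k \<le> length xs \<and> prefix_sum p xs k \<le> M * pj) xs)"

definition W0_step5 :: "real \<Rightarrow> (nat \<Rightarrow> real) \<Rightarrow> nat list \<Rightarrow> nat set" where
  "W0_step5 M p xs =
     (if \<exists>k\<le>length xs. prefix_sum p xs k \<ge> M / 3
      then set (take (LEAST k. k \<le> length xs \<and> prefix_sum p xs k \<ge> M / 3) xs)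
      else set xs)"

definition W_step5 :: "real \<Rightarrow> (nat \<Rightarrow> real) \<Rightarrow> nat list \<Rightarrow> real \<Rightarrow> nat set" where
  "W_step5 M p xs pj =
     (let W0 = W0_step5 M p xs in
      if load p W0 > min (2 * M / 3) (M * pj) then set xs - W0 else W0)"

definition try_migrate :: "real \<Rightarrow> (nat \<Rightarrow> real) \<Rightarrow> nat set \<Rightarrow> nat \<Rightarrow> nat set \<Rightarrow> nat set" where
  "try_migrate M p Y j W =
     (if load p Y - load p W + p j > 2 - M then Y else insert j (Y - W))"

text \<open>One step of Algorithm D: job j arrives while Y is the set of jobs on m2;
Y' is the set of jobs on m2 after handling j. Nondeterminism only in the
tie-breaking of the sorted order of Y.\<close>
definition D_step :: "real \<Rightarrow> (nat \<Rightarrow> real) \<Rightarrow> (nat \<Rightarrow> nat) \<Rightarrow> nat set \<Rightarrow> nat \<Rightarrow> nat set \<Rightarrow> bool" where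
  "D_step M p g Y j Y' \<longleftrightarrow>
     (if g j = 1 \<or> load p Y \<ge> M then Y' = Y
      else if load p Y + p j \<le> 2 - M then Y' = insert j Y
      else if p j \<ge> M then
        (\<exists>xs. set xs = Y \<and> sorted_noninc p xs \<and> Y' = try_migrate M p Y j (W_step4 M p xs (p j)))
      else
        (\<exists>xs. set xs = Y \<and> sorted_noninc p xs \<and> Y' = try_migrate M p Y j (W_step5 M p xs (p j))))"

text \<open>A run of Algorithm D on the first n jobs: Ys k is the set of jobs on m2
after the first k jobs (jobs 0..k-1) have been handled.\<close>
definition D_run :: "real \<Rightarrow> (nat \<Rightarrow> real) \<Rightarrow> (nat \<Rightarrow> nat) \<Rightarrow> nat \<Rightarrow> (nat \<Rightarrow> nat set) \<Rightarrow> bool" where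
  "D_run M p g n Ys \<longleftrightarrow> Ys 0 = {} \<and> (\<forall>j<n. D_step M p g (Ys j) j (Ys (Suc j)))"

definition makespan :: "nat \<Rightarrow> (nat \<Rightarrow> real) \<Rightarrow> nat set \<Rightarrow> real" where
  "makespan n p A = max (load p ({..<n} - A)) (load p A)"

definition feasible :: "nat \<Rightarrow> (nat \<Rightarrow> nat) \<Rightarrow> nat set \<Rightarrow> bool" where
  "feasible n g A \<longleftrightarrow> A \<subseteq> {..<n} \<and> (\<forall>i\<in>A. g i = 2)"

definition opt_makespan :: "nat \<Rightarrow> (nat \<Rightarrow> real) \<Rightarrow> (nat \<Rightarrow> nat) \<Rightarrow> real" where
  "opt_makespan n p g = Min {makespan n p A | A. feasible n g A}"

definition migrated :: "nat \<Rightarrow> nat set \<Rightarrow> nat set \<Rightarrow> nat set" where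
  "migrated j Y Y' = {i. i < j \<and> ((i \<in> Y) \<noteq> (i \<in> Y'))}"

end

theory Submission
  imports Defs
begin

lemma load_set_list: "distinct xs \<Longrightarrow> load p (set xs) = sum_list (map p xs)"
  by (simp add: load_def sum.distinct_set_conv_list)

lemma prefix_load: "distinct xs \<Longrightarrow> prefix_sum p xs k = load p (set (take k xs))"
  by (simp add: prefix_sum_def load_set_list)

lemma prefix_Suc: "k < length xs \<Longrightarrow> prefix_sum p xs (Suc k) = prefix_sum p xs k + p (xs!k)"
  by (simp add: prefix_sum_def take_Suc_conv_app_nth)

lemma prefix_0: "prefix_sum p xs 0 = 0" by (simp add: prefix_sum_def)

lemma prefix_len: "length xs \<le> k \<Longrightarrow> prefix_sum p xs k = sum_list (map p xs)"
  by (simp add: prefix_sum_def)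

lemma sorted_le: "sorted_noninc p xs \<Longrightarrow> i \<le> k \<Longrightarrow> k < length xs \<Longrightarrow> p (xs!k) \<le> p (xs!i)"
  unfolding sorted_noninc_def
  by (cases "i = k") (auto simp: sorted_wrt_iff_nth_less)

lemma take_elem_ge:
  assumes "sorted_noninc p xs" "k < length xs" "z \<in> set (take (Suc k) xs)"
  shows "p (xs!k) \<le> p z"
proof -
  obtain i where i: "i < length (take (Suc k) xs)" "take (Suc k) xs ! i = z"
    using assms(3) by (auto simp: in_set_conv_nth)
  then have "i \<le> k" "z = xs ! i" by auto
  then show ?thesis using sorted_le[OF assms(1)] assms(2) by auto
qed

lemma load_mono:
  assumes "finite B" "A \<subseteq> B" "\<forall>i\<in>B. 0 < p i"
  shows "load p A \<le> load p B"
  unfolding load_def using assms by (intro sum_mono2) auto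

lemma load_diff:
  assumes "finite B" "A \<subseteq> B"
  shows "load p (B - A) = load p B - load p A"
  unfolding load_def using assms by (simp add: sum_diff finite_subset)

lemma load_insert:
  assumes "finite B" "j \<notin> B"
  shows "load p (insert j B) = p j + load p B"
  unfolding load_def using assms by simp

lemma W4_props:
  fixes xs :: "nat list" and p :: "nat \<Rightarrow> real"
  assumes "0 \<le> M * pj"
  shows "\<exists>k. k \<le> length xs \<and> prefix_sum p xs k \<le> M * pj
    \<and> (k < length xs \<longrightarrow> prefix_sum p xs (Suc k) > M * pj)
    \<and> W_step4 M p xs pj = set (take k xs)"
proof -
  define P where "P = (\<lambda>k. k \<le> length xs \<and> prefix_sum p xs k \<le> M * pj)"
  define k where "k = Greatest P"
  have P0: "P 0" using assms(1) by (simp add: prefix_0 P_def)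
  have b: "\<And>y. P y \<Longrightarrow> y \<le> length xs" by (simp add: P_def)
  have Pk: "P k" unfolding k_def by (rule GreatestI_nat[of P 0 "length xs", OF P0 b])
  have "k < length xs \<longrightarrow> prefix_sum p xs (Suc k) > M * pj"
  proof
    assume "k < length xs"
    show "prefix_sum p xs (Suc k) > M * pj"
    proof (rule ccontr)
      assume "\<not> ?thesis"
      then have "P (Suc k)" using \<open>k < length xs\<close> by (simp add: P_def)
      then have "Suc k \<le> Greatest P" using Greatest_le_nat[of P "Suc k" "length xs"] b by blast
      then have "Suc k \<le> k" by (simp add: k_def)
      then show False by simp
    qed
  qed
  moreover have "W_step4 M p xs pj = set (take k xs)" unfolding W_step4_def k_def P_def by simp
  ultimately show ?thesis using Pk unfolding P_def by blast
qed

lemma W0_props: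
  fixes xs :: "nat list" and p :: "nat \<Rightarrow> real"
  assumes srt: "sorted_noninc p xs" and pos: "\<forall>i\<in>set xs. 0 < p i" and M0: "0 < M"
  shows "(W0_step5 M p xs = set xs \<and> sum_list (map p xs) < M/3) \<or>
         (\<exists>k. 1 \<le> k \<and> k \<le> length xs \<and> W0_step5 M p xs = set (take k xs)
              \<and> prefix_sum p xs k \<ge> M/3 \<and> (k = 1 \<or> prefix_sum p xs k < 2*M/3))"
proof (cases "\<exists>k\<le>length xs. prefix_sum p xs k \<ge> M / 3")
  case False
  then have "\<not> prefix_sum p xs (length xs) \<ge> M/3" by auto
  then have "sum_list (map p xs) < M/3" by (simp add: prefix_len)
  moreover have "W0_step5 M p xs = set xs" using False unfolding W0_step5_def by metis
  ultimately show ?thesis by simp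
next
  case True
  define P where "P = (\<lambda>k. k \<le> length xs \<and> prefix_sum p xs k \<ge> M / 3)"
  define k where "k = Least P"
  have ex: "\<exists>k. P k" using True unfolding P_def by blast
  have Pk: "P k" unfolding k_def using LeastI_ex[OF ex] .
  have W0: "W0_step5 M p xs = set (take k xs)"
    using True unfolding W0_step5_def k_def P_def by simp
  have k0: "k \<noteq> 0"
  proof
    assume "k = 0" then show False using Pk M0 by (simp add: P_def prefix_0)
  qed
  have lt: "\<not> P (k - 1)" unfolding k_def using not_less_Least[of "Least P - 1" P] k0 k_def by simp
  have km1: "prefix_sum p xs (k - 1) < M / 3" using lt Pk unfolding P_def by auto
  have "k = 1 \<or> prefix_sum p xs k < 2*M/3"
  proof (cases "k = 1")
    case False
    then have k2: "2 \<le> k" using k0 by simp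
    have kl: "k - 1 < length xs" using Pk k0 unfolding P_def by linarith
    have dist: "distinct xs" using srt unfolding sorted_noninc_def by simp
    have sp: "prefix_sum p xs k = prefix_sum p xs (k - 1) + p (xs ! (k - 1))"
      using prefix_Suc[OF kl, of p] k0 by simp
    have a: "p (xs ! (k - 1)) \<le> p (xs ! 0)" using sorted_le[OF srt, of 0 "k - 1"] kl by simp
    have mem: "xs ! 0 \<in> set (take (k - 1) xs)"
    proof -
      have l: "0 < length (take (k - 1) xs)" using k2 kl by simp
      have "take (k - 1) xs ! 0 = xs ! 0" using k2 by simp
      then show ?thesis using nth_mem[OF l] by simp
    qed
    have "load p {xs ! 0} \<le> load p (set (take (k - 1) xs))"
      using pos mem by (intro load_mono) (auto dest: in_set_takeD)
    then have b: "p (xs ! 0) \<le> prefix_sum p xs (k - 1)"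
      by (simp add: prefix_load[OF dist] load_def)
    show ?thesis using sp a b km1 by simp
  qed simp
  then show ?thesis using Pk W0 k0 unfolding P_def by auto
qed

lemma step4_case:
  fixes M :: real and p :: "nat \<Rightarrow> real"
  assumes m1: "2/3 \<le> M" and m2: "M < 3/4" and pj1: "p j \<le> 1"
    and jY: "j \<notin> Y" and pos: "\<forall>i\<in>Y. 0 < p i"
    and srt: "sorted_noninc p xs" and sY: "set xs = Y"
    and pM: "M \<le> p j" and yM: "load p Y < M" and ev: "load p Y + p j > 2 - M"
    and Y': "Y' = try_migrate M p Y j (W_step4 M p xs (p j))"
  shows "(Y' = Y \<or> (\<exists>W\<subseteq>Y. Y' = insert j (Y - W) \<and> load p W \<le> M * p j))
    \<and> load p Y' \<le> 2 - M \<and> (Y' \<noteq> Y \<longrightarrow> M \<le> load p Y')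
    \<and> (Y' = Y \<longrightarrow> (\<exists>Z\<subseteq>Y. load p Z > M * p j \<and> (\<forall>z\<in>Z. p z + p j > 1)))"
proof -
  have fin: "finite Y" using sY by auto
  have dist: "distinct xs" using srt unfolding sorted_noninc_def by simp
  have Mp0: "0 \<le> M * p j" using m1 pM by simp
  obtain k where k: "k \<le> length xs" "prefix_sum p xs k \<le> M * p j"
      "k < length xs \<longrightarrow> prefix_sum p xs (Suc k) > M * p j"
      and W: "W_step4 M p xs (p j) = set (take k xs)"
    using W4_props[OF Mp0, where p=p and xs=xs] by blast
  define W where "W = set (take k xs)"
  have WY: "W \<subseteq> Y" unfolding W_def using sY by (auto dest: in_set_takeD)
  have lw: "load p W = prefix_sum p xs k" unfolding W_def by (simp add: prefix_load[OF dist])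
  have ly: "load p Y = sum_list (map p xs)" using sY load_set_list[OF dist] by simp
  have lYW: "load p (Y - W) = load p Y - load p W" by (rule load_diff[OF fin WY])
  have lYW0: "0 \<le> load p (Y - W)" unfolding load_def using pos by (intro sum_nonneg) auto
  show ?thesis
  proof (cases "load p Y - load p W + p j > 2 - M")
    case True
    then have Y'Y: "Y' = Y" using Y' W unfolding try_migrate_def W_def by simp
    have "\<exists>Z\<subseteq>Y. load p Z > M * p j \<and> (\<forall>z\<in>Z. p z + p j > 1)"
    proof -
      have kl: "k < length xs"
      proof (rule ccontr)
        assume "\<not> k < length xs"
        then have "k = length xs" using k(1) by simp
        then have "load p W = load p Y" using lw ly by (simp add: prefix_len)
        then show False using True pj1 m2 by simp
      qed
      define Z where "Z = set (take (Suc k) xs)"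
      have ZY: "Z \<subseteq> Y" unfolding Z_def using sY by (auto dest: in_set_takeD)
      have lz: "load p Z > M * p j" using k(3) kl unfolding Z_def by (simp add: prefix_load[OF dist])
      have sk: "prefix_sum p xs (Suc k) = prefix_sum p xs k + p (xs ! k)" by (rule prefix_Suc[OF kl])
      have wlt: "load p W < 2 * M - 2 + p j" using True yM by simp
      have MM: "M * M \<le> M * p j" using pM m1 by (intro mult_left_mono) auto
      have sq: "0 < (1 - M) * (1 - M)" using m2 by simp
      have xk: "p (xs ! k) + p j > 1"
        using sk k(3) kl lw wlt MM sq by (simp add: algebra_simps)
      have "\<forall>z\<in>Z. p z + p j > 1"
        using take_elem_ge[OF srt kl] xk unfolding Z_def by fastforce
      then show ?thesis using ZY lz by blast
    qed
    then show ?thesis using Y'Y yM m2 by simp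
  next
    case False
    then have Y'e: "Y' = insert j (Y - W)" using Y' W unfolding try_migrate_def W_def by simp
    have ly': "load p Y' = p j + (load p Y - load p W)"
      using Y'e load_insert[of "Y - W" j p] fin jY lYW by simp
    have "load p W \<le> M * p j" using lw k(2) by simp
    moreover have "Y' \<noteq> Y" using Y'e jY by auto
    ultimately show ?thesis using Y'e WY ly' False lYW lYW0 pM by auto
  qed
qed

lemma step5_case:
  fixes M :: real and p :: "nat \<Rightarrow> real"
  assumes m1: "2/3 \<le> M" and m2: "M < 3/4" and pj1: "p j \<le> 1"
    and jY: "j \<notin> Y" and pos: "\<forall>i\<in>Y. 0 < p i"
    and srt: "sorted_noninc p xs" and sY: "set xs = Y"
    and pM: "p j < M" and yM: "load p Y < M" and ev: "load p Y + p j > 2 - M"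
    and Y': "Y' = try_migrate M p Y j (W_step5 M p xs (p j))"
  shows "(Y' = Y \<or> (\<exists>W\<subseteq>Y. Y' = insert j (Y - W) \<and> load p W \<le> M * p j))
    \<and> load p Y' \<le> 2 - M \<and> (Y' \<noteq> Y \<longrightarrow> M \<le> load p Y')
    \<and> (Y' = Y \<longrightarrow> (\<exists>x\<in>Y. p x + p j > 2 - M))"
proof -
  have fin: "finite Y" using sY by auto
  have dist: "distinct xs" using srt unfolding sorted_noninc_def by simp
  have M0: "0 < M" using m1 by simp
  have pj: "p j > 2 - 2 * M" using yM ev by simp
  have Mph: "M * p j > M / 2"
  proof -
    have "M * (1/2) < M * p j" using pj m2 M0 by (intro mult_strict_left_mono) auto
    then show ?thesis by simp
  qed
  have Mp2: "M \<le> 2 * (M * p j)" using Mph by simp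
  have MpM: "(1 + M) * (2 - 2 * M) \<le> (1 + M) * p j" using pj M0 by (intro mult_left_mono) auto
  define W0 where "W0 = W0_step5 M p xs"
  have pos': "\<forall>i\<in>set xs. 0 < p i" using pos sY by simp
  have ly: "load p Y = sum_list (map p xs)" using sY load_set_list[OF dist] by simp
  have F: "(W0 = Y \<and> load p W0 < M/3) \<or>
       (load p W0 \<ge> M/3 \<and> W0 \<subseteq> Y \<and> (load p W0 < 2*M/3 \<or> (\<exists>x\<in>Y. load p W0 = p x)))"
  proof -
    from W0_props[OF srt pos' M0]
    show ?thesis
    proof
      assume "W0_step5 M p xs = set xs \<and> sum_list (map p xs) < M / 3"
      then show ?thesis using sY ly unfolding W0_def by simp
    next
      assume "\<exists>k\<ge>1. k \<le> length xs \<and> W0_step5 M p xs = set (take k xs) \<and>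
          M / 3 \<le> prefix_sum p xs k \<and> (k = 1 \<or> prefix_sum p xs k < 2 * M / 3)"
      then obtain k where k: "1 \<le> k" "k \<le> length xs" "W0 = set (take k xs)"
         "M / 3 \<le> prefix_sum p xs k" "k = 1 \<or> prefix_sum p xs k < 2 * M / 3"
        unfolding W0_def by blast
      have lw: "load p W0 = prefix_sum p xs k" using k(3) by (simp add: prefix_load[OF dist])
      have sub: "W0 \<subseteq> Y" using k(3) sY by (auto dest: in_set_takeD)
      have "load p W0 < 2*M/3 \<or> (\<exists>x\<in>Y. load p W0 = p x)"
      proof (cases "k = 1")
        case True
        then have "0 < length xs" using k(1,2) by linarith
        then have "xs ! 0 \<in> Y" using sY nth_mem by blast
        moreover have "prefix_sum p xs k = p (xs ! 0)"
          using True \<open>0 < length xs\<close> prefix_Suc[of 0 xs p] by (simp add: prefix_0)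
        ultimately show ?thesis using lw by auto
      next
        case False
        then show ?thesis using k(5) lw by simp
      qed
      then show ?thesis using lw k(4) sub by simp
    qed
  qed
  have W0Y: "W0 \<subseteq> Y" using F by auto
  have lYW0: "load p (Y - W0) = load p Y - load p W0" by (rule load_diff[OF fin W0Y])
  have lYW00: "0 \<le> load p (Y - W0)" unfolding load_def using pos by (intro sum_nonneg) auto
  have lW00: "0 \<le> load p W0" unfolding load_def using pos W0Y by (intro sum_nonneg) (auto intro: less_imp_le)
  have Weq: "W_step5 M p xs (p j) = (if load p W0 > min (2 * M / 3) (M * p j) then Y - W0 else W0)"
    unfolding W_step5_def W0_def Let_def using sY by simp
  show ?thesis
  proof (cases "load p W0 > min (2 * M / 3) (M * p j)")
    case big: True
    have eqW: "W_step5 M p xs (p j) = Y - W0" using big Weq by simp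
    have YYW: "Y - (Y - W0) = W0" using W0Y by auto
    have lW: "load p (Y - W0) = load p Y - load p W0" by (rule lYW0)
    show ?thesis
    proof (cases "load p Y - load p (Y - W0) + p j > 2 - M")
      case True
      then have Y'Y: "Y' = Y" using Y' eqW unfolding try_migrate_def by simp
      have c: "load p W0 + p j > 2 - M" using True lW by simp
      have "\<exists>x\<in>Y. p x + p j > 2 - M"
        using F big c Mph m2 m1 pM by auto
      then show ?thesis using Y'Y yM m2 by simp
    next
      case False
      then have Y'e: "Y' = insert j W0" using Y' eqW YYW unfolding try_migrate_def by simp
      have ly': "load p Y' = p j + load p W0"
        using Y'e load_insert[of W0 j p] fin W0Y jY finite_subset by auto
      have c: "\<not> load p W0 + p j > 2 - M" using False lW by simp
      have bg: "load p W0 > 2*M/3 \<or> load p W0 > M * p j" using big by (auto simp: min_def split: if_splits)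
      have mig: "load p (Y - W0) \<le> M * p j" using bg
      proof
        assume "load p W0 > 2*M/3" then show ?thesis using lW yM Mph Mp2 m1 by linarith
      next
        assume "load p W0 > M * p j" then show ?thesis using lW yM Mph Mp2 m1 by linarith
      qed
      have geM: "M \<le> load p Y'" using bg
      proof
        assume "load p W0 > 2*M/3" then show ?thesis using ly' pj m2 by linarith
      next
        assume a: "load p W0 > M * p j"
        have mm: "M * M \<le> M * (3/4)" using m1 m2 by (intro mult_left_mono) auto
        have "(1 + M) * (2 - 2*M) = 2 - 2*(M*M)" by (simp add: algebra_simps)
        then have "(1 + M) * (2 - 2 * M) \<ge> M" using mm m2 by linarith
        moreover have "(1 + M) * p j = p j + M * p j" by (simp add: algebra_simps)
        ultimately show ?thesis using a ly' MpM by linarith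
      qed
      have "Y' \<noteq> Y" using Y'e jY by auto
      moreover have "\<exists>W\<subseteq>Y. Y' = insert j (Y - W) \<and> load p W \<le> M * p j"
        using Y'e YYW mig by (intro exI[of _ "Y - W0"]) auto
      ultimately show ?thesis using geM ly' c by auto
    qed
  next
    case small: False
    have eqW: "W_step5 M p xs (p j) = W0" using small Weq by simp
    show ?thesis
    proof (cases "load p Y - load p W0 + p j > 2 - M")
      case True
      have False using F True yM pM m1 m2 by auto
      then show ?thesis ..
    next
      case False
      then have Y'e: "Y' = insert j (Y - W0)" using Y' eqW unfolding try_migrate_def by simp
      have ly': "load p Y' = p j + (load p Y - load p W0)"
        using Y'e load_insert[of "Y - W0" j p] fin jY lYW0 by simp
      have mig: "load p W0 \<le> M * p j" using small by simp
      have geM: "M \<le> load p Y'" using small ly' ev m2 by simp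
      have "Y' \<noteq> Y" using Y'e jY by auto
      then show ?thesis using Y'e W0Y mig geM ly' False by auto
    qed
  qed
qed

lemma step:
  fixes M :: real and p :: "nat \<Rightarrow> real"
  assumes m1: "2/3 \<le> M" and m2: "M < 3/4" and pj: "0 < p j" and pj1: "p j \<le> 1"
    and fin: "finite Y" and jY: "j \<notin> Y" and pos: "\<forall>i\<in>Y. 0 < p i"
    and yb: "load p Y \<le> 2 - M" and D: "D_step M p g Y j Y'"
  shows "(Y' = Y \<or> (\<exists>W\<subseteq>Y. Y' = insert j (Y - W) \<and> load p W \<le> M * p j \<and> g j \<noteq> 1))
    \<and> load p Y' \<le> 2 - M
    \<and> (g j = 1 \<longrightarrow> Y' = Y)
    \<and> (g j \<noteq> 1 \<and> load p Y < M \<and> load p Y + p j \<le> 2 - M \<longrightarrow> Y' = insert j Y)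
    \<and> (g j \<noteq> 1 \<and> load p Y < M \<and> load p Y + p j > 2 - M \<longrightarrow>
         (Y' \<noteq> Y \<longrightarrow> M \<le> load p Y') \<and>
         (Y' = Y \<longrightarrow> ((M \<le> p j \<and> (\<exists>Z\<subseteq>Y. load p Z > M * p j \<and> (\<forall>z\<in>Z. p z + p j > 1)))
                    \<or> (p j < M \<and> (\<exists>x\<in>Y. p x + p j > 2 - M)))))"
proof (cases "g j = 1 \<or> load p Y \<ge> M")
  case True
  then have "Y' = Y" using D unfolding D_step_def by simp
  then show ?thesis using True yb by auto
next
  case c1: False
  then have g1: "g j \<noteq> 1" and yM: "load p Y < M" by auto
  show ?thesis
  proof (cases "load p Y + p j \<le> 2 - M")
    case True
    then have Y'e: "Y' = insert j Y" using D c1 unfolding D_step_def by simp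
    have l: "load p Y' = p j + load p Y" using Y'e load_insert[OF fin jY] by simp
    have ex: "\<exists>W\<subseteq>Y. Y' = insert j (Y - W) \<and> load p W \<le> M * p j \<and> g j \<noteq> 1"
      using Y'e g1 pj m1 by (intro exI[of _ "{}"]) (auto simp: load_def)
    have "load p Y' \<le> 2 - M" using l True by simp
    moreover have nt: "\<not> load p Y + p j > 2 - M" using True by simp
    ultimately show ?thesis using ex True g1 Y'e by blast
  next
    case ev: False
    then have ev': "load p Y + p j > 2 - M" by simp
    show ?thesis
    proof (cases "p j \<ge> M")
      case True
      then obtain xs where xs: "set xs = Y" "sorted_noninc p xs"
          "Y' = try_migrate M p Y j (W_step4 M p xs (p j))"
        using D c1 ev unfolding D_step_def by auto
      from step4_case[OF m1 m2 pj1 jY pos xs(2) xs(1) True yM ev' xs(3)]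
      show ?thesis using g1 ev True yM by auto
    next
      case False
      then have pM: "p j < M" by simp
      then obtain xs where xs: "set xs = Y" "sorted_noninc p xs"
          "Y' = try_migrate M p Y j (W_step5 M p xs (p j))"
        using D c1 ev unfolding D_step_def by auto
      from step5_case[OF m1 m2 pj1 jY pos xs(2) xs(1) pM yM ev' xs(3)]
      show ?thesis using g1 ev pM yM by auto
    qed
  qed
qed

lemma mono_upto: "(\<And>t. t < n \<Longrightarrow> (f t::real) \<le> f (Suc t)) \<Longrightarrow> t \<le> n \<Longrightarrow> f t \<le> f n"
proof (induction n)
  case 0 then show ?case by simp
next
  case (Suc n)
  show ?case
  proof (cases "t = Suc n")
    case False
    then have "f t \<le> f n" using Suc by simp
    also have "f n \<le> f (Suc n)" using Suc.prems(1) by simp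
    finally show ?thesis .
  qed simp
qed

lemma load_union:
  assumes "finite A" "finite B" "A \<inter> B = {}"
  shows "load p (A \<union> B) = load p A + load p B"
  unfolding load_def using assms by (simp add: sum.union_disjoint)

theorem mainTheorem13:
  fixes M :: real and n :: nat and p :: "nat \<Rightarrow> real" and g :: "nat \<Rightarrow> nat"
    and Ys :: "nat \<Rightarrow> nat set"
  assumes "2 / 3 \<le> M" and "M < 3 / 4"
    and "\<forall>i<n. p i > 0 \<and> g i \<in> {1, 2}"
    and "opt_makespan n p g = 1"
    and "D_run M p g n Ys"
  shows "(\<forall>j<n. load p (migrated j (Ys j) (Ys (Suc j))) \<le> M * p j)
       \<and> feasible n g (Ys n)
       \<and> makespan n p (Ys n) \<le> 2 - M"
proof -
  note m1 = assms(1) and m2 = assms(2)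
  have ppos: "\<And>i. i < n \<Longrightarrow> 0 < p i" using assms(3) by simp
  have gv: "\<And>i. i < n \<Longrightarrow> g i = 1 \<or> g i = 2" using assms(3) by simp
  have Ys0: "Ys 0 = {}" and Dst: "\<And>j. j < n \<Longrightarrow> D_step M p g (Ys j) j (Ys (Suc j))"
    using assms(5) unfolding D_run_def by auto
  define S where "S = {makespan n p A | A. feasible n g A}"
  have Seq: "S = (\<lambda>A. makespan n p A) ` {A. feasible n g A}" unfolding S_def by auto
  have "{A. feasible n g A} \<subseteq> Pow {..<n}" unfolding feasible_def by auto
  then have "finite {A. feasible n g A}" by (rule finite_subset) simp
  then have finS: "finite S" using Seq by simp
  have "feasible n g {}" unfolding feasible_def by simp
  then have neS: "S \<noteq> {}" unfolding S_def by auto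
  have "Min S \<in> S" using Min_in[OF finS neS] .
  moreover have "Min S = 1" using assms(4) unfolding opt_makespan_def S_def by simp
  ultimately obtain A where Af: "feasible n g A" and Am: "makespan n p A = 1"
    unfolding S_def by auto
  have An: "A \<subseteq> {..<n}" and Ag: "\<forall>i\<in>A. g i = 2" using Af unfolding feasible_def by auto
  have finA: "finite A" using An finite_subset by blast
  have lA: "load p A \<le> 1" and lcA: "load p ({..<n} - A) \<le> 1"
    using Am unfolding makespan_def by auto
  have posn: "\<forall>i\<in>{..<n}. 0 < p i" using ppos by simp
  have pj1: "\<And>j. j < n \<Longrightarrow> p j \<le> 1"
  proof -
    fix j assume j: "j < n"
    show "p j \<le> 1"
    proof (cases "j \<in> A")
      case True
      then have "load p {j} \<le> load p A" using An posn finA by (intro load_mono) auto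
      then show ?thesis using lA by (simp add: load_def)
    next
      case False
      then have "load p {j} \<le> load p ({..<n} - A)" using j posn by (intro load_mono) auto
      then show ?thesis using lcA by (simp add: load_def)
    qed
  qed
  have Ptot: "load p {..<n} \<le> 2"
    using load_diff[of "{..<n}" A p] An lA lcA by simp
  have inv: "\<And>t. t \<le> n \<Longrightarrow> Ys t \<subseteq> {..<t} \<and> (\<forall>i\<in>Ys t. g i = 2) \<and> load p (Ys t) \<le> 2 - M"
  proof -
    fix t show "t \<le> n \<Longrightarrow> Ys t \<subseteq> {..<t} \<and> (\<forall>i\<in>Ys t. g i = 2) \<and> load p (Ys t) \<le> 2 - M"
    proof (induction t)
      case 0 then show ?case using Ys0 m2 by (simp add: load_def)
    next
      case (Suc t)
      then have tn: "t < n" by simp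
      have IH: "Ys t \<subseteq> {..<t}" "\<forall>i\<in>Ys t. g i = 2" "load p (Ys t) \<le> 2 - M" using Suc by auto
      have fin: "finite (Ys t)" using IH(1) finite_subset by blast
      have tY: "t \<notin> Ys t" using IH(1) by auto
      have pos: "\<forall>i\<in>Ys t. 0 < p i" using IH(1) tn ppos by auto
      note st = step[OF m1 m2 ppos[OF tn] pj1[OF tn] fin tY pos IH(3) Dst[OF tn]]
      have s1: "Ys (Suc t) = Ys t \<or> (\<exists>W\<subseteq>Ys t. Ys (Suc t) = insert t (Ys t - W) \<and> load p W \<le> M * p t \<and> g t \<noteq> 1)"
        by (rule st[THEN conjunct1])
      have s2: "load p (Ys (Suc t)) \<le> 2 - M" by (rule st[THEN conjunct2, THEN conjunct1])
      have "Ys (Suc t) \<subseteq> {..<Suc t} \<and> (\<forall>i\<in>Ys (Suc t). g i = 2)"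
        using s1
      proof
        assume "Ys (Suc t) = Ys t" then show ?thesis using IH by auto
      next
        assume "\<exists>W\<subseteq>Ys t. Ys (Suc t) = insert t (Ys t - W) \<and> load p W \<le> M * p t \<and> g t \<noteq> 1"
        then obtain W where "Ys (Suc t) = insert t (Ys t - W)" "g t \<noteq> 1" by blast
        then show ?thesis using IH gv[OF tn] by auto
      qed
      then show ?case using s2 by simp
    qed
  qed
  have STP: "\<And>j. j < n \<Longrightarrow>
    (Ys (Suc j) = Ys j \<or> (\<exists>W\<subseteq>Ys j. Ys (Suc j) = insert j (Ys j - W) \<and> load p W \<le> M * p j \<and> g j \<noteq> 1))
    \<and> load p (Ys (Suc j)) \<le> 2 - M
    \<and> (g j = 1 \<longrightarrow> Ys (Suc j) = Ys j)
    \<and> (g j \<noteq> 1 \<and> load p (Ys j) < M \<and> load p (Ys j) + p j \<le> 2 - M \<longrightarrow> Ys (Suc j) = insert j (Ys j))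
    \<and> (g j \<noteq> 1 \<and> load p (Ys j) < M \<and> load p (Ys j) + p j > 2 - M \<longrightarrow>
         (Ys (Suc j) \<noteq> Ys j \<longrightarrow> M \<le> load p (Ys (Suc j))) \<and>
         (Ys (Suc j) = Ys j \<longrightarrow> ((M \<le> p j \<and> (\<exists>Z\<subseteq>Ys j. load p Z > M * p j \<and> (\<forall>z\<in>Z. p z + p j > 1)))
                    \<or> (p j < M \<and> (\<exists>x\<in>Ys j. p x + p j > 2 - M)))))"
  proof -
    fix j assume tn: "j < n"
    have IH: "Ys j \<subseteq> {..<j}" "\<forall>i\<in>Ys j. g i = 2" "load p (Ys j) \<le> 2 - M" using inv[of j] tn by auto
    have fin: "finite (Ys j)" using IH(1) finite_subset by blast
    have tY: "j \<notin> Ys j" using IH(1) by auto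
    have pos: "\<forall>i\<in>Ys j. 0 < p i" using IH(1) tn ppos by auto
    show "?thesis j" by (rule step[OF m1 m2 ppos[OF tn] pj1[OF tn] fin tY pos IH(3) Dst[OF tn]])
  qed
  have ST1: "Ys (Suc j) = Ys j \<or> (\<exists>W\<subseteq>Ys j. Ys (Suc j) = insert j (Ys j - W) \<and> load p W \<le> M * p j)"
    if j: "j < n" for j
  proof -
    have "Ys (Suc j) = Ys j \<or> (\<exists>W\<subseteq>Ys j. Ys (Suc j) = insert j (Ys j - W) \<and> load p W \<le> M * p j \<and> g j \<noteq> 1)"
      by (rule STP[OF j, THEN conjunct1])
    then show ?thesis by blast
  qed
  have ST3: "g j = 1 \<longrightarrow> Ys (Suc j) = Ys j" if j: "j < n" for j
    by (rule STP[OF j, THEN conjunct2, THEN conjunct2, THEN conjunct1])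
  have ST4: "g j \<noteq> 1 \<and> load p (Ys j) < M \<and> load p (Ys j) + p j \<le> 2 - M \<longrightarrow> Ys (Suc j) = insert j (Ys j)"
    if j: "j < n" for j
    by (rule STP[OF j, THEN conjunct2, THEN conjunct2, THEN conjunct2, THEN conjunct1])
  have ST5: "g j \<noteq> 1 \<and> load p (Ys j) < M \<and> load p (Ys j) + p j > 2 - M \<longrightarrow>
         (Ys (Suc j) \<noteq> Ys j \<longrightarrow> M \<le> load p (Ys (Suc j))) \<and>
         (Ys (Suc j) = Ys j \<longrightarrow> ((M \<le> p j \<and> (\<exists>Z\<subseteq>Ys j. load p Z > M * p j \<and> (\<forall>z\<in>Z. p z + p j > 1)))
                    \<or> (p j < M \<and> (\<exists>x\<in>Ys j. p x + p j > 2 - M))))"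
    if j: "j < n" for j
    by (rule STP[OF j, THEN conjunct2, THEN conjunct2, THEN conjunct2, THEN conjunct2])
  have ST5a: "M \<le> load p (Ys (Suc j))"
    if "j < n" "g j \<noteq> 1" "load p (Ys j) < M" "load p (Ys j) + p j > 2 - M" "Ys (Suc j) \<noteq> Ys j" for j
  proof -
    have "g j \<noteq> 1 \<and> load p (Ys j) < M \<and> load p (Ys j) + p j > 2 - M" using that by simp
    then have "Ys (Suc j) \<noteq> Ys j \<longrightarrow> M \<le> load p (Ys (Suc j))" using mp[OF ST5[OF that(1)]] by blast
    then show ?thesis using that(5) by simp
  qed
  have ST5b: "(M \<le> p j \<and> (\<exists>Z\<subseteq>Ys j. load p Z > M * p j \<and> (\<forall>z\<in>Z. p z + p j > 1)))
                    \<or> (p j < M \<and> (\<exists>x\<in>Ys j. p x + p j > 2 - M))"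
    if "j < n" "g j \<noteq> 1" "load p (Ys j) < M" "load p (Ys j) + p j > 2 - M" "Ys (Suc j) = Ys j" for j
  proof -
    have "g j \<noteq> 1 \<and> load p (Ys j) < M \<and> load p (Ys j) + p j > 2 - M" using that by simp
    then have "Ys (Suc j) = Ys j \<longrightarrow> ((M \<le> p j \<and> (\<exists>Z\<subseteq>Ys j. load p Z > M * p j \<and> (\<forall>z\<in>Z. p z + p j > 1)))
                    \<or> (p j < M \<and> (\<exists>x\<in>Ys j. p x + p j > 2 - M)))" using mp[OF ST5[OF that(1)]] by blast
    then show ?thesis using that(5) by (rule mp)
  qed
  have part1: "\<forall>j<n. load p (migrated j (Ys j) (Ys (Suc j))) \<le> M * p j"
  proof (intro allI impI)
    fix j assume j: "j < n"
    have Yj: "Ys j \<subseteq> {..<j}" using inv[of j] j by auto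
    from ST1[OF j] show "load p (migrated j (Ys j) (Ys (Suc j))) \<le> M * p j"
    proof
      assume "Ys (Suc j) = Ys j"
      then have "migrated j (Ys j) (Ys (Suc j)) = {}" unfolding migrated_def by auto
      then show ?thesis using ppos[OF j] m1 by (simp add: load_def)
    next
      assume "\<exists>W\<subseteq>Ys j. Ys (Suc j) = insert j (Ys j - W) \<and> load p W \<le> M * p j"
      then obtain W where W: "W \<subseteq> Ys j" "Ys (Suc j) = insert j (Ys j - W)" "load p W \<le> M * p j" by blast
      have "migrated j (Ys j) (Ys (Suc j)) = W" unfolding migrated_def using W(1,2) Yj by auto
      then show ?thesis using W(3) by simp
    qed
  qed
  have part2: "feasible n g (Ys n)" using inv[of n] unfolding feasible_def by auto
  have Ynsub: "Ys n \<subseteq> {..<n}" using inv[of n] by auto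
  have lYn: "load p (Ys n) \<le> 2 - M" using inv[of n] by simp
  have l1: "load p ({..<n} - Ys n) = load p {..<n} - load p (Ys n)"
    by (rule load_diff[OF _ Ynsub]) simp
  have part3: "load p ({..<n} - Ys n) \<le> 2 - M"
  proof (cases "M \<le> load p (Ys n)")
    case True then show ?thesis using l1 Ptot by simp
  next
    case False
    then have ynM: "load p (Ys n) < M" by simp
    have monoY: "\<And>t. t < n \<Longrightarrow> load p (Ys t) \<le> load p (Ys (Suc t))"
    proof -
      fix t assume t: "t < n"
      have Yt: "Ys t \<subseteq> {..<t}" using inv[of t] t by auto
      have fin: "finite (Ys t)" using Yt finite_subset by blast
      from ST1[OF t] show "load p (Ys t) \<le> load p (Ys (Suc t))"
      proof
        assume "\<exists>W\<subseteq>Ys t. Ys (Suc t) = insert t (Ys t - W) \<and> load p W \<le> M * p t"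
        then obtain W where W: "W \<subseteq> Ys t" "Ys (Suc t) = insert t (Ys t - W)" "load p W \<le> M * p t" by blast
        have tn: "t \<notin> Ys t - W" using Yt by auto
        have "load p (Ys (Suc t)) = p t + load p (Ys t - W)"
          using W(2) load_insert[of "Ys t - W" t p] fin tn by simp
        also have "load p (Ys t - W) = load p (Ys t) - load p W" by (rule load_diff[OF fin W(1)])
        finally have e: "load p (Ys (Suc t)) = p t + (load p (Ys t) - load p W)" .
        have "M * p t \<le> p t" using ppos[OF t] m2 by simp
        then show ?thesis using W(3) e by simp
      qed simp
    qed
    have yt: "load p (Ys t) < M" if "t \<le> n" for t
      using mono_upto[of n "\<lambda>t. load p (Ys t)", OF monoY that] ynM by simp
    define ev where "ev = (\<lambda>i. g i \<noteq> 1 \<and> load p (Ys i) + p i > 2 - M)"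
    have char: "\<And>t. t \<le> n \<Longrightarrow> Ys t = {i. i < t \<and> g i \<noteq> 1 \<and> \<not> ev i}"
    proof -
      fix t show "t \<le> n \<Longrightarrow> Ys t = {i. i < t \<and> g i \<noteq> 1 \<and> \<not> ev i}"
      proof (induction t)
        case 0 then show ?case using Ys0 by simp
      next
        case (Suc t)
        then have tn: "t < n" and IH: "Ys t = {i. i < t \<and> g i \<noteq> 1 \<and> \<not> ev i}" by auto
        have ytM: "load p (Ys t) < M" using yt tn by simp
        have ySM: "load p (Ys (Suc t)) < M" using yt Suc.prems by simp
        show ?case
        proof (cases "g t = 1")
          case True
          then have "Ys (Suc t) = Ys t" using ST3[OF tn] by simp
          then show ?thesis using IH True by (auto simp: less_Suc_eq)
        next
          case g1: False
          show ?thesis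
          proof (cases "ev t")
            case True
            then have e: "load p (Ys t) + p t > 2 - M" unfolding ev_def by simp
            have "Ys (Suc t) = Ys t"
            proof (rule ccontr)
              assume "Ys (Suc t) \<noteq> Ys t"
              then have "M \<le> load p (Ys (Suc t))" using ST5a[OF tn g1 ytM e] by simp
              then show False using ySM by simp
            qed
            then show ?thesis using IH True by (auto simp: less_Suc_eq)
          next
            case False
            then have "load p (Ys t) + p t \<le> 2 - M" using g1 unfolding ev_def by simp
            then have "Ys (Suc t) = insert t (Ys t)" using ST4[OF tn] g1 ytM by simp
            then show ?thesis using IH False g1 by (auto simp: less_Suc_eq)
          qed
        qed
      qed
    qed
    define G1 where "G1 = {i. i < n \<and> g i = 1}"
    define E where "E = {i. i < n \<and> ev i}"
    have split: "{..<n} - Ys n = G1 \<union> E" using char[of n] gv unfolding G1_def E_def ev_def by auto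
    have disj: "G1 \<inter> E = {}" unfolding G1_def E_def ev_def by auto
    have finG1: "finite G1" and finE: "finite E" unfolding G1_def E_def by auto
    have lsplit: "load p ({..<n} - Ys n) = load p G1 + load p E"
      using split load_union[OF finG1 finE disj] by simp
    have G1cA: "G1 \<subseteq> {..<n} - A" using Ag unfolding G1_def by auto
    have "load p G1 \<le> load p ({..<n} - A)" using G1cA posn by (intro load_mono) auto
    then have lG1: "load p G1 \<le> 1" using lcA by simp
    have ev1: "b < n" and ev2: "p b > 2 - 2 * M" and ev3: "Ys b \<subseteq> {..<b}"
      and ev4: "Ys b \<inter> E = {}" and ev5: "Ys b \<inter> G1 = {}"
      and evR: "(M \<le> p b \<and> (\<exists>Z\<subseteq>Ys b. load p Z > M * p b \<and> (\<forall>z\<in>Z. p z + p b > 1)))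
                    \<or> (p b < M \<and> (\<exists>x\<in>Ys b. p x + p b > 2 - M))"
      if bE: "b \<in> E" for b
    proof -
      from bE have bn: "b < n" and evb: "ev b" unfolding E_def by auto
      have ybM: "load p (Ys b) < M" using yt bn by simp
      have ySM: "load p (Ys (Suc b)) < M" using yt bn by simp
      have e2: "g b \<noteq> 1" "load p (Ys b) + p b > 2 - M" using evb unfolding ev_def by auto
      have same: "Ys (Suc b) = Ys b"
      proof (rule ccontr)
        assume "Ys (Suc b) \<noteq> Ys b"
        then have "M \<le> load p (Ys (Suc b))" using ST5a[OF bn e2(1) ybM e2(2)] by simp
        then show False using ySM by simp
      qed
      show "(M \<le> p b \<and> (\<exists>Z\<subseteq>Ys b. load p Z > M * p b \<and> (\<forall>z\<in>Z. p z + p b > 1)))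
                    \<or> (p b < M \<and> (\<exists>x\<in>Ys b. p x + p b > 2 - M))"
        by (rule ST5b[OF bn e2(1) ybM e2(2) same])
      have cb: "Ys b = {i. i < b \<and> g i \<noteq> 1 \<and> \<not> ev i}" using char bn by simp
      show "Ys b \<inter> E = {}" "Ys b \<inter> G1 = {}" "Ys b \<subseteq> {..<b}"
        using cb unfolding E_def G1_def by auto
      show "p b > 2 - 2 * M" using e2 ybM by simp
      show "b < n" by (rule bn)
    qed
    have opp: "x \<in> (if b \<in> A then {..<n} - A else A)"
      if b: "b < n" and x: "x < n" "x \<noteq> b" "p x + p b > 1" for b x
    proof -
      have lxb: "load p {x, b} = p x + p b" using x(2) by (simp add: load_def)
      show "x \<in> (if b \<in> A then {..<n} - A else A)"
      proof (cases "b \<in> A")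
        case True
        show ?thesis
        proof (rule ccontr)
          assume "\<not> ?thesis"
          then have "{x, b} \<subseteq> A" using True x by auto
          then have "load p {x, b} \<le> load p A" using An posn finA by (intro load_mono) auto
          then show False using lxb lA x(3) by simp
        qed
      next
        case False
        show ?thesis
        proof (rule ccontr)
          assume "\<not> ?thesis"
          then have "{x, b} \<subseteq> {..<n} - A" using False x b by auto
          then have "load p {x, b} \<le> load p ({..<n} - A)" using posn by (intro load_mono) auto
          then show False using lxb lcA x(3) by simp
        qed
      qed
    qed
    have Cload: "load p T \<le> 1" if T: "T \<subseteq> (if b \<in> A then {..<n} - A else A)" for b T
    proof (cases "b \<in> A")
      case True
      then have "load p T \<le> load p ({..<n} - A)" using T posn by (intro load_mono) auto
      then show ?thesis using lcA by simp
    next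
      case False
      then have "load p T \<le> load p A" using T posn An finA by (intro load_mono) auto
      then show ?thesis using lA by simp
    qed
    show ?thesis
    proof (cases "E = {}")
      case True
      then show ?thesis using lsplit lG1 m2 by (simp add: load_def)
    next
      case False
      define b where "b = Max E"
      have bE: "b \<in> E" using Max_in[OF finE False] b_def by simp
      have bn: "b < n" by (rule ev1[OF bE])
      have Yb: "Ys b \<subseteq> {..<b}" by (rule ev3[OF bE])
      have ZC: "Z \<subseteq> (if b \<in> A then {..<n} - A else A)"
        if Z: "Z \<subseteq> Ys b" "\<forall>z\<in>Z. p z + p b > 1" for Z
      proof (rule subsetI)
        fix z assume zZ: "z \<in> Z"
        have zb: "z < b" using zZ Z(1) Yb by auto
        have zn: "z < n" using zb bn by simp
        have zne: "z \<noteq> b" using zb by simp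
        have pz: "p z + p b > 1" using Z(2) zZ by blast
        show "z \<in> (if b \<in> A then {..<n} - A else A)" by (rule opp[OF bn zn zne pz])
      qed
      have xC: "x \<in> (if b \<in> A then {..<n} - A else A)"
        if x: "x \<in> Ys b" "p x + p b > 2 - M" for x
      proof -
        have xb: "x < b" using x(1) Yb by auto
        have zn: "x < n" using xb bn by simp
        have zne: "x \<noteq> b" using xb by simp
        have pz: "p x + p b > 1" using x(2) m2 by simp
        show ?thesis by (rule opp[OF bn zn zne pz])
      qed
      have Eb: "E = {b}"
      proof (rule ccontr)
        assume "E \<noteq> {b}"
        then obtain a where aE: "a \<in> E" and ab: "a \<noteq> b" using bE by blast
        have an: "a < n" by (rule ev1[OF aE])
        have aY: "a \<notin> Ys b" using ev4[OF bE] aE by blast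
        have pab: "p a + p b > 1" using ev2[OF aE] ev2[OF bE] m2 by simp
        have aC: "a \<in> (if b \<in> A then {..<n} - A else A)" using opp[OF bn an ab pab] .
        from evR[OF bE] show False
        proof
          assume "M \<le> p b \<and> (\<exists>Z\<subseteq>Ys b. load p Z > M * p b \<and> (\<forall>z\<in>Z. p z + p b > 1))"
          then obtain Z where pbM: "M \<le> p b" and Z: "Z \<subseteq> Ys b" "load p Z > M * p b" "\<forall>z\<in>Z. p z + p b > 1"
            by blast
          have "Z \<subseteq> {..<b}" using Z(1) Yb by (rule order_trans)
          then have finZ: "finite Z" using finite_subset by auto
          have aZ: "a \<notin> Z" using aY Z(1) by blast
          have "insert a Z \<subseteq> (if b \<in> A then {..<n} - A else A)" using ZC[OF Z(1) Z(3)] aC by blast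
          then have "load p (insert a Z) \<le> 1" by (rule Cload)
          moreover have "load p (insert a Z) = p a + load p Z" by (rule load_insert[OF finZ aZ])
          moreover have "M * M \<le> M * p b" using pbM m1 by (intro mult_left_mono) auto
          moreover have "0 < (1 - M) * (1 - M)" using m2 by simp
          moreover have "(1 - M) * (1 - M) = 1 - 2 * M + M * M" by (simp add: algebra_simps)
          moreover have "p a > 2 - 2 * M" by (rule ev2[OF aE])
          ultimately show False using Z(2) by linarith
        next
          assume "p b < M \<and> (\<exists>x\<in>Ys b. p x + p b > 2 - M)"
          then obtain x where pbM: "p b < M" and x: "x \<in> Ys b" "p x + p b > 2 - M" by blast
          have xa: "x \<noteq> a" using x(1) aY by blast
          have "{a, x} \<subseteq> (if b \<in> A then {..<n} - A else A)" using xC[OF x] aC by blast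
          then have "load p {a, x} \<le> 1" by (rule Cload)
          moreover have "load p {a, x} = p a + p x" using xa by (simp add: load_def)
          moreover have "p a > 2 - 2 * M" by (rule ev2[OF aE])
          ultimately show False using x(2) pbM m2 by simp
        qed
      qed
      have lE: "load p E = p b" using Eb by (simp add: load_def)
      show ?thesis
      proof (rule ccontr)
        assume neg: "\<not> ?thesis"
        then have big: "load p G1 + p b > 2 - M" using lsplit lE by simp
        have bG1: "b \<notin> G1" using bE disj by blast
        show False
        proof (cases "b \<in> A")
          case False
          then have "insert b G1 \<subseteq> {..<n} - A" using G1cA bn by auto
          then have "load p (insert b G1) \<le> load p ({..<n} - A)" using posn by (intro load_mono) auto
          moreover have "load p (insert b G1) = p b + load p G1" using load_insert[OF finG1 bG1] .
          ultimately show False using big m2 lcA by simp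
        next
          case bA: True
          from evR[OF bE] show False
          proof
            assume "M \<le> p b \<and> (\<exists>Z\<subseteq>Ys b. load p Z > M * p b \<and> (\<forall>z\<in>Z. p z + p b > 1))"
            then obtain Z where pbM: "M \<le> p b" and Z: "Z \<subseteq> Ys b" "load p Z > M * p b" "\<forall>z\<in>Z. p z + p b > 1"
              by blast
            have "Z \<subseteq> {..<b}" using Z(1) Yb by (rule order_trans)
          then have finZ: "finite Z" using finite_subset by auto
            have dZ: "Z \<inter> G1 = {}" using Z(1) ev5[OF bE] by blast
            have "Z \<subseteq> {..<n} - A" using ZC[OF Z(1) Z(3)] bA by simp
            then have "Z \<union> G1 \<subseteq> (if b \<in> A then {..<n} - A else A)" using G1cA bA by auto
            then have "load p (Z \<union> G1) \<le> 1" by (rule Cload)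
            moreover have "load p (Z \<union> G1) = load p Z + load p G1" by (rule load_union[OF finZ finG1 dZ])
            moreover have "0 \<le> (1 - M) * (1 - p b)" using m2 pj1[OF bn] by simp
            moreover have "(1 - M) * (1 - p b) = 1 - M - p b + M * p b" by (simp add: algebra_simps)
            ultimately show False using Z(2) big by linarith
          next
            assume "p b < M \<and> (\<exists>x\<in>Ys b. p x + p b > 2 - M)"
            then obtain x where pbM: "p b < M" and x: "x \<in> Ys b" "p x + p b > 2 - M" by blast
            have xG: "x \<notin> G1" using x(1) ev5[OF bE] by blast
            have "x \<in> {..<n} - A" using xC[OF x] bA by simp
            then have "insert x G1 \<subseteq> (if b \<in> A then {..<n} - A else A)" using G1cA bA by auto
            then have "load p (insert x G1) \<le> 1" by (rule Cload)
            moreover have "load p (insert x G1) = p x + load p G1" using load_insert[OF finG1 xG] .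
            ultimately show False using x(2) big pbM m2 by simp
          qed
        qed
      qed
    qed
  qed
  have "makespan n p (Ys n) \<le> 2 - M" unfolding makespan_def using part3 lYn by simp
  then show ?thesis using part1 part2 by blast
qed

end
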